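(* Let $X$ be a Tychonoff topological space which has a complete sequence $(\mathcal D_n)_{n\in\mathbb N}$ of covers such that each $\mathcal D_n$ is countable, disjoint, and consists of $F_\sigma$ subsets of $X$. Then $X$ is absolutely $F_{\sigma\delta}$, i.e. $X$ is an $F_{\sigma\delta}$ subset of $cX$ for every compactification $cX$ of $X$.
   Context: A filter on $X$ is a nonempty family of subsets of $X$ closed under supersets and finite intersections and not containing $\emptyset$. A point $x\in X$ is an accumulation point of a filter $\mathcal F$ if every neighborhood of $x$ meets every element of $\mathcal F$. A sequence $(\mathcal F_n)_{n\in\mathbb N}$ of covers of $X$ is complete if every filter on $X$ which intersects each $\mathcal F_n$ (i.e. contains some element of $\mathcal F_n$ for each $n$) has an accumulation point in $X$. A cover is disjoint if its elements are pairwise disjoint, countable if it has countably many elements, and $F_\sigma$ if its elements are $F_\sigma$ subsets of $X$. A compactification of $X$ is a compact (Hausdorff) space $cX$ together with a homeomorphic embedding of $X$ onto a dense subspace of $cX$; we identify $X$ with its image. *)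

theory Defs
  imports "HOL-Analysis.Analysis"
begin

definition filter_on :: "'a topology \<Rightarrow> 'a set set \<Rightarrow> bool" where
  "filter_on X \<F> \<longleftrightarrow>
     \<F> \<noteq> {} \<and> (\<forall>A\<in>\<F>. A \<subseteq> topspace X) \<and> {} \<notin> \<F> \<and>
     (\<forall>A B. A \<in> \<F> \<and> A \<subseteq> B \<and> B \<subseteq> topspace X \<longrightarrow> B \<in> \<F>) \<and>
     (\<forall>A B. A \<in> \<F> \<and> B \<in> \<F> \<longrightarrow> A \<inter> B \<in> \<F>)"

definition accumulation_point_of_filter :: "'a topology \<Rightarrow> 'a set set \<Rightarrow> 'a \<Rightarrow> bool" where
  "accumulation_point_of_filter X \<F> x \<longleftrightarrow>
     x \<in> topspace X \<and> (\<forall>U A. openin X U \<and> x \<in> U \<and> A \<in> \<F> \<longrightarrow> U \<inter> A \<noteq> {})"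

definition cover_of :: "'a topology \<Rightarrow> 'a set set \<Rightarrow> bool" where
  "cover_of X \<C> \<longleftrightarrow> (\<forall>C\<in>\<C>. C \<subseteq> topspace X) \<and> \<Union>\<C> = topspace X"

definition complete_sequence :: "'a topology \<Rightarrow> (nat \<Rightarrow> 'a set set) \<Rightarrow> bool" where
  "complete_sequence X \<D> \<longleftrightarrow>
     (\<forall>n. cover_of X (\<D> n)) \<and>
     (\<forall>\<F>. filter_on X \<F> \<and> (\<forall>n. \<F> \<inter> \<D> n \<noteq> {}) \<longrightarrow>
          (\<exists>x\<in>topspace X. accumulation_point_of_filter X \<F> x))"

definition tychonoff_space :: "'a topology \<Rightarrow> bool" where
  "tychonoff_space X \<longleftrightarrow> completely_regular_space X \<and> Hausdorff_space X"

definition fsigma_delta_in :: "'a topology \<Rightarrow> 'a set \<Rightarrow> bool" where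
  "fsigma_delta_in X S \<longleftrightarrow> (\<exists>A :: nat \<Rightarrow> 'a set. (\<forall>n. fsigma_in X (A n)) \<and> (\<Inter>n. A n) = S)"

definition compactification :: "'a topology \<Rightarrow> 'b topology \<Rightarrow> ('a \<Rightarrow> 'b) \<Rightarrow> bool" where
  "compactification X C e \<longleftrightarrow>
     compact_space C \<and> Hausdorff_space C \<and> embedding_map X C e \<and>
     C closure_of (e ` topspace X) = topspace C"

end

theory Submission
  imports Defs
begin

lemma emb_closure_in:
  assumes emb: "embedding_map X C e" and cl: "closedin X F"
    and x: "x \<in> topspace X" and ex: "e x \<in> C closure_of (e ` F)"
  shows "x \<in> F"
proof -
  have hm: "homeomorphic_map X (subtopology C (e ` topspace X)) e"
    using emb by (simp add: embedding_map_def)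
  have "closedin (subtopology C (e ` topspace X)) (e ` F)"
    using hm cl homeomorphic_map_closedness_eq closedin_subset by blast
  then obtain T where T: "closedin C T" "e ` F = T \<inter> e ` topspace X"
    by (auto simp: closedin_subtopology)
  then have "C closure_of (e ` F) \<subseteq> T"
    by (simp add: closure_of_minimal)
  then have "e x \<in> e ` F" using ex x T by auto
  then obtain z where z: "z \<in> F" "e z = e x" by auto
  have "inj_on e (topspace X)"
    using hm homeomorphic_imp_injective_map by blast
  then show ?thesis using z x cl closedin_subset
    by (metis inj_on_def subsetD)
qed

lemma emb_cont: "embedding_map X C e \<Longrightarrow> continuous_map X C e"
  by (metis embedding_map_def continuous_map_in_subtopology homeomorphic_imp_continuous_map)

lemma sandwich:
  assumes L: "Lindelof_space X" and emb: "embedding_map X C e" and R: "regular_space C"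
    and G: "openin C G" and sub: "e ` topspace X \<subseteq> G"
  shows "\<exists>W. fsigma_in C W \<and> e ` topspace X \<subseteq> W \<and> W \<subseteq> G"
proof -
  have cm: "continuous_map X C e" using emb by (rule emb_cont)
  have "\<forall>x\<in>topspace X. \<exists>V. openin C V \<and> e x \<in> V \<and> C closure_of V \<subseteq> G"
  proof
    fix x assume x: "x \<in> topspace X"
    have "closedin C (topspace C - G)" using G by blast
    moreover have "e x \<in> topspace C - (topspace C - G)"
    proof -
      have "e x \<in> G" using sub x by blast
      then show ?thesis using openin_subset[OF G] by blast
    qed
    ultimately obtain U where U: "openin C U" "e x \<in> U" "disjnt (topspace C - G) (C closure_of U)"
      using R unfolding regular_space by blast
    have "C closure_of U \<subseteq> G"
      using U(3) closure_of_subset_topspace[of C U] unfolding disjnt_def by blast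
    then show "\<exists>V. openin C V \<and> e x \<in> V \<and> C closure_of V \<subseteq> G"
      using U by blast
  qed
  then obtain V where V: "\<And>x. x \<in> topspace X \<Longrightarrow> openin C (V x) \<and> e x \<in> V x \<and> C closure_of (V x) \<subseteq> G"
    by metis
  define f where "f x = topspace X \<inter> e -` V x" for x
  have "\<forall>U\<in>f ` topspace X. openin X U"
  proof
    fix U assume "U \<in> f ` topspace X"
    then obtain x where x: "x \<in> topspace X" "U = f x" by blast
    have "{z \<in> topspace X. e z \<in> V x} = f x" by (auto simp: f_def)
    then show "openin X U" using openin_continuous_map_preimage[OF cm, of "V x"] V[OF x(1)] x(2) by simp
  qed
  moreover have "topspace X \<subseteq> \<Union>(f ` topspace X)"
    using V f_def by auto
  ultimately obtain \<V> where \<V>: "countable \<V>" "\<V> \<subseteq> f ` topspace X" "topspace X \<subseteq> \<Union>\<V>"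
    using L unfolding Lindelof_space_alt by meson
  then obtain K where K: "countable K" "K \<subseteq> topspace X" "\<V> = f ` K"
    by (meson countable_subset_image)
  define W where "W = (\<Union>x\<in>K. C closure_of V x)"
  have "fsigma_in C W"
    unfolding W_def using K by (intro fsigma_in_Union) (auto intro: closed_imp_fsigma_in)
  moreover have "e ` topspace X \<subseteq> W"
  proof
    fix y assume "y \<in> e ` topspace X"
    then obtain x where x: "x \<in> topspace X" "y = e x" by auto
    have "x \<in> \<Union>(f ` K)" using \<V>(3) K(3) x(1) by blast
    then obtain k where "k \<in> K" "x \<in> f k" by blast
    then have "e x \<in> V k" by (simp add: f_def)
    moreover have "V k \<subseteq> C closure_of (V k)"
    proof -
      have "k \<in> topspace X" using K(2) \<open>k \<in> K\<close> by blast
      then have "openin C (V k)" using V by blast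
      then have "V k \<subseteq> topspace C" by (rule openin_subset)
      then show ?thesis by (rule closure_of_subset)
    qed
    ultimately show "y \<in> W" using x \<open>k \<in> K\<close> unfolding W_def by blast
  qed
  moreover have "W \<subseteq> G" using V K W_def by auto
  ultimately show ?thesis by blast
qed

lemma complete_Lindelof:
  assumes comp: "complete_sequence X \<D>" and cnt: "\<And>n. countable (\<D> n)"
  shows "Lindelof_space X"
  unfolding Lindelof_space_alt
proof (intro allI impI)
  fix \<U> assume U: "(\<forall>U\<in>\<U>. openin X U) \<and> topspace X \<subseteq> \<Union>\<U>"
  have cov: "\<And>n. cover_of X (\<D> n)" using comp by (simp add: complete_sequence_def)
  show "\<exists>\<V>. countable \<V> \<and> \<V> \<subseteq> \<U> \<and> topspace X \<subseteq> \<Union>\<V>"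
  proof (rule ccontr)
    assume nc: "\<not> ?thesis"
    define big where "big S \<longleftrightarrow> \<not> (\<exists>\<V>. countable \<V> \<and> \<V> \<subseteq> \<U> \<and> S \<subseteq> \<Union>\<V>)" for S
    have step: "\<exists>D\<in>\<D> n. big (S \<inter> D)" if bS: "big S" and SX: "S \<subseteq> topspace X" for S n
    proof (rule ccontr)
      assume "\<not> ?thesis"
      then have "\<forall>D\<in>\<D> n. \<exists>\<V>. countable \<V> \<and> \<V> \<subseteq> \<U> \<and> S \<inter> D \<subseteq> \<Union>\<V>"
        by (auto simp: big_def)
      then obtain g where g: "\<And>D. D \<in> \<D> n \<Longrightarrow> countable (g D) \<and> g D \<subseteq> \<U> \<and> S \<inter> D \<subseteq> \<Union>(g D)"
        by metis
      have "countable (\<Union>(g ` \<D> n))" using g cnt by auto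
      moreover have "\<Union>(g ` \<D> n) \<subseteq> \<U>" using g by auto
      moreover have "S \<subseteq> \<Union>(\<Union>(g ` \<D> n))"
      proof
        fix x assume "x \<in> S"
        then obtain D where "D \<in> \<D> n" "x \<in> D" using SX cov[of n] \<open>x \<in> S\<close> unfolding cover_of_def by blast
        then have "x \<in> \<Union>(g D)" using g \<open>x \<in> S\<close> by blast
        then show "x \<in> \<Union>(\<Union>(g ` \<D> n))" using \<open>D \<in> \<D> n\<close> by blast
      qed
      ultimately show False using bS big_def by blast
    qed
    define sq where "sq = rec_nat (topspace X) (\<lambda>n S. S \<inter> (SOME D. D \<in> \<D> n \<and> big (S \<inter> D)))"
    have sq0: "sq 0 = topspace X" by (simp add: sq_def)
    have sqS: "sq (Suc n) = sq n \<inter> (SOME D. D \<in> \<D> n \<and> big (sq n \<inter> D))" for n by (simp add: sq_def)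
    have inv: "big (sq n) \<and> sq n \<subseteq> topspace X" for n
    proof (induction n)
      case 0 then show ?case using nc sq0 big_def by auto
    next
      case (Suc n)
      then have ex: "\<exists>D. D \<in> \<D> n \<and> big (sq n \<inter> D)" using step by blast
      show ?case using someI_ex[OF ex] Suc sqS by auto
    qed
    have Dn: "(SOME D. D \<in> \<D> n \<and> big (sq n \<inter> D)) \<in> \<D> n" for n
    proof -
      have "\<exists>D. D \<in> \<D> n \<and> big (sq n \<inter> D)" using step inv by blast
      then show ?thesis by (rule someI2_ex) blast
    qed
    have anti: "n \<le> m \<Longrightarrow> sq m \<subseteq> sq n" for n m
      by (rule lift_Suc_antimono_le[of sq]) (auto simp: sqS)
    define F where "F = {A. A \<subseteq> topspace X \<and> (\<exists>n \<V>. finite \<V> \<and> \<V> \<subseteq> \<U> \<and> sq n - \<Union>\<V> \<subseteq> A)}"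
    have Fmem: "A \<in> F \<longleftrightarrow> A \<subseteq> topspace X \<and> (\<exists>n \<V>. finite \<V> \<and> \<V> \<subseteq> \<U> \<and> sq n - \<Union>\<V> \<subseteq> A)" for A
      by (simp add: F_def)
    have FI: "A \<in> F" if "A \<subseteq> topspace X" "finite \<V>" "\<V> \<subseteq> \<U>" "sq n - \<Union>\<V> \<subseteq> A" for A n \<V>
      using that Fmem by blast
    have "filter_on X F"
      unfolding filter_on_def
    proof (intro conjI allI impI ballI)
      have "topspace X \<in> F" by (rule FI[of _ "{}" 0]) (auto simp: sq0)
      then show "F \<noteq> {}" by blast
      show "A \<subseteq> topspace X" if "A \<in> F" for A using that Fmem[of A] by blast
      show "{} \<notin> F"
      proof
        assume "{} \<in> F"
        then obtain n \<V> where "finite \<V>" "\<V> \<subseteq> \<U>" "sq n - \<Union>\<V> \<subseteq> {}" using Fmem[of "{}"] by blast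
        then have "countable \<V>" "\<V> \<subseteq> \<U>" "sq n \<subseteq> \<Union>\<V>" by (auto simp: countable_finite)
        then show False using inv[of n] unfolding big_def by blast
      qed
      show "B \<in> F" if AB: "A \<in> F \<and> A \<subseteq> B \<and> B \<subseteq> topspace X" for A B
      proof -
        from AB obtain n \<V> where "finite \<V>" "\<V> \<subseteq> \<U>" "sq n - \<Union>\<V> \<subseteq> A" using Fmem[of A] by blast
        then show ?thesis using AB by (intro FI[of _ \<V> n]) auto
      qed
      show "A \<inter> B \<in> F" if AB: "A \<in> F \<and> B \<in> F" for A B
      proof -
        obtain n \<V> where 1: "finite \<V>" "\<V> \<subseteq> \<U>" "sq n - \<Union>\<V> \<subseteq> A" "A \<subseteq> topspace X" using AB Fmem[of A] by blast
        obtain m \<W> where 2: "finite \<W>" "\<W> \<subseteq> \<U>" "sq m - \<Union>\<W> \<subseteq> B" using AB Fmem[of B] by blast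
        have "sq (max n m) - \<Union>(\<V> \<union> \<W>) \<subseteq> A \<inter> B"
          using 1 2 anti[of n "max n m"] anti[of m "max n m"] by auto
        then show ?thesis using 1 2 by (intro FI[of _ "\<V> \<union> \<W>" "max n m"]) auto
      qed
    qed
    moreover have "F \<inter> \<D> n \<noteq> {}" for n
    proof -
      let ?D = "SOME D. D \<in> \<D> n \<and> big (sq n \<inter> D)"
      have "?D \<subseteq> topspace X" using Dn[of n] cov[of n] by (auto simp: cover_of_def)
      moreover have "sq (Suc n) - \<Union>{} \<subseteq> ?D" using sqS by auto
      ultimately have "?D \<in> F" by (intro FI[of _ "{}" "Suc n"]) auto
      then show ?thesis using Dn[of n] by blast
    qed
    ultimately obtain x where x: "x \<in> topspace X" "accumulation_point_of_filter X F x"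
      using comp by (auto simp: complete_sequence_def)
    then obtain U where U1: "U \<in> \<U>" "x \<in> U" using U by auto
    have U2: "openin X U" using U U1 by blast
    have "sq 0 - \<Union>{U} \<in> F" using U1 sq0 by (intro FI[of _ "{U}" 0]) auto
    then have "U \<inter> (sq 0 - \<Union>{U}) \<noteq> {}"
      using x(2) U1 U2 unfolding accumulation_point_of_filter_def by blast
    then show False by auto
  qed
qed


theorem proposition4p5:
  fixes X :: "'a topology" and \<D> :: "nat \<Rightarrow> 'a set set"
  assumes "tychonoff_space X"
    and "complete_sequence X \<D>"
    and "\<And>n. countable (\<D> n)"
    and "\<And>n. pairwise disjnt (\<D> n)"
    and "\<And>n D. D \<in> \<D> n \<Longrightarrow> fsigma_in X D"
  shows "\<forall>(C :: 'b topology) (e :: 'a \<Rightarrow> 'b).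
           compactification X C e \<longrightarrow> fsigma_delta_in C (e ` topspace X)"
proof (intro allI impI)
  fix C :: "'b topology" and e :: "'a \<Rightarrow> 'b"
  assume cX: "compactification X C e"
  note comp = assms(2)
  have emb: "embedding_map X C e" and Hs: "Hausdorff_space C"
    using cX by (auto simp: compactification_def)
  have reg: "regular_space C"
    using cX compact_Hausdorff_imp_regular_space by (auto simp: compactification_def)
  have cm: "continuous_map X C e" using emb by (rule emb_cont)
  have eX: "e ` topspace X \<subseteq> topspace C" using cm continuous_map_image_subset_topspace by blast
  have Lin: "Lindelof_space X" using complete_Lindelof comp assms(3) by blast
  have cov: "\<And>n. cover_of X (\<D> n)" using comp by (simp add: complete_sequence_def)
  define Fp where "Fp D = (SOME F :: nat \<Rightarrow> 'a set. (\<forall>k. closedin X (F k)) \<and> \<Union>(range F) = D)" for D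
  have Fp: "(\<forall>k. closedin X (Fp D k)) \<and> \<Union>(range (Fp D)) = D" if "D \<in> \<D> n" for D n
  proof -
    have "\<exists>F :: nat \<Rightarrow> 'a set. (\<forall>k. closedin X (F k)) \<and> \<Union>(range F) = D"
      using assms(5)[OF that] unfolding fsigma_in_ascending by blast
    then show ?thesis unfolding Fp_def by (rule someI_ex)
  qed
  define valid where "valid t \<longleftrightarrow> (\<forall>i<length t. fst (t!i) \<in> \<D> i)" for t :: "('a set \<times> nat) list"
  define P where "P t = topspace X \<inter> (\<Inter>i\<in>{..<length t}. Fp (fst (t!i)) (snd (t!i)))" for t :: "('a set \<times> nat) list"
  define T where "T = {t. valid t}"
  have PX: "P t \<subseteq> topspace X" for t by (auto simp: P_def)
  have Pcl: "closedin X (P t)" if "valid t" for t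
  proof -
    have 1: "P t = \<Inter>(insert (topspace X) ((\<lambda>i. Fp (fst (t!i)) (snd (t!i))) ` {..<length t}))"
      by (auto simp: P_def)
    have 2: "closedin X (Fp (fst (t!i)) (snd (t!i)))" if "i < length t" for i
      using Fp \<open>valid t\<close> that valid_def by blast
    have "closedin X (\<Inter>(insert (topspace X) ((\<lambda>i. Fp (fst (t!i)) (snd (t!i))) ` {..<length t})))"
      by (rule closedin_Inter) (use 2 in auto)
    with 1 show ?thesis by simp
  qed
  have Psub: "P t \<subseteq> fst (t!i)" if "valid t" "i < length t" for t i
  proof -
    have "P t \<subseteq> Fp (fst (t!i)) (snd (t!i))" using that by (auto simp: P_def)
    also have "\<dots> \<subseteq> fst (t!i)" using Fp[of "fst (t!i)" i] that valid_def by blast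
    finally show ?thesis .
  qed
  have cT: "countable T"
  proof -
    have "T \<subseteq> lists ((\<Union>n. \<D> n) \<times> UNIV)"
      by (auto simp: T_def valid_def in_set_conv_nth) (metis fst_conv)
    moreover have "countable (lists ((\<Union>n. \<D> n) \<times> (UNIV :: nat set)))"
      using assms(3) by auto
    ultimately show ?thesis by (rule countable_subset)
  qed
  define Cl where "Cl t = C closure_of (e ` P t)" for t
  define An where "An n = \<Union>(Cl ` {t \<in> T. length t = n})" for n
  define Inc where "Inc = {(t,t'). t \<in> T \<and> t' \<in> T \<and> (\<exists>i. i < length t \<and> i < length t' \<and> fst (t!i) \<noteq> fst (t'!i))}"
  have cInc: "countable Inc"
  proof (rule countable_subset)
    show "Inc \<subseteq> T \<times> T" unfolding Inc_def by blast
    show "countable (T \<times> T)" using cT by blast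
  qed
  have Wex: "\<exists>W. fsigma_in C W \<and> e ` topspace X \<subseteq> W \<and> W \<subseteq> topspace C - (Cl (fst p) \<inter> Cl (snd p))"
    if pI: "p \<in> Inc" for p
  proof (rule sandwich[OF Lin emb reg])
    show "openin C (topspace C - (Cl (fst p) \<inter> Cl (snd p)))"
      by (auto simp: Cl_def intro!: openin_diff)
    show "e ` topspace X \<subseteq> topspace C - (Cl (fst p) \<inter> Cl (snd p))"
    proof
      fix y assume "y \<in> e ` topspace X"
      then obtain x where x: "x \<in> topspace X" "y = e x" by auto
      obtain t t' where p0: "p = (t,t')" "t \<in> T" "t' \<in> T"
          "\<exists>i. i < length t \<and> i < length t' \<and> fst (t!i) \<noteq> fst (t'!i)"
        using pI unfolding Inc_def by blast
      then obtain i where i: "i < length t" "i < length t'" "fst (t!i) \<noteq> fst (t'!i)" by blast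
      have p: "p = (t,t')" "valid t" "valid t'" "i < length t" "i < length t'"
        "fst (t!i) \<noteq> fst (t'!i)" using p0 i by (auto simp: T_def)
      have "\<not> (e x \<in> Cl t \<and> e x \<in> Cl t')"
      proof
        assume "e x \<in> Cl t \<and> e x \<in> Cl t'"
        then have "x \<in> P t" "x \<in> P t'"
          using emb_closure_in[OF emb Pcl[OF p(2)] x(1)] emb_closure_in[OF emb Pcl[OF p(3)] x(1)]
          unfolding Cl_def by blast+
        then have "x \<in> fst (t!i)" "x \<in> fst (t'!i)" using Psub[OF p(2) p(4)] Psub[OF p(3) p(5)] by blast+
        moreover have "fst (t!i) \<in> \<D> i" "fst (t'!i) \<in> \<D> i" using p valid_def by auto
        ultimately show False using assms(4)[of i] p(6) unfolding pairwise_def disjnt_def by blast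
      qed
      then show "y \<in> topspace C - (Cl (fst p) \<inter> Cl (snd p))" using x p eX by auto
    qed
  qed
  define Wf where "Wf p = (SOME W. fsigma_in C W \<and> e ` topspace X \<subseteq> W \<and> W \<subseteq> topspace C - (Cl (fst p) \<inter> Cl (snd p)))" for p
  have Wf: "fsigma_in C (Wf p) \<and> e ` topspace X \<subseteq> Wf p \<and> Wf p \<subseteq> topspace C - (Cl (fst p) \<inter> Cl (snd p))"
    if "p \<in> Inc" for p
    unfolding Wf_def by (rule someI_ex[OF Wex[OF that]])
  define J where "J = range (Inl :: nat \<Rightarrow> nat + (('a set \<times> nat) list \<times> ('a set \<times> nat) list)) \<union> Inr ` Inc"
  define B where "B j = (case j of Inl n \<Rightarrow> An n | Inr p \<Rightarrow> Wf p)" for j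
  have cJ: "countable J" unfolding J_def using cInc by (intro countable_Un countable_image) auto
  have J0: "J \<noteq> {}" by (auto simp: J_def)
  have Bfs: "fsigma_in C (B j)" if "j \<in> J" for j
  proof (cases j)
    case (Inl n)
    have "countable (Cl ` {t \<in> T. length t = n})" using cT by auto
    moreover have "fsigma_in C S" if "S \<in> Cl ` {t \<in> T. length t = n}" for S
      using that by (auto simp: Cl_def intro!: closed_imp_fsigma_in)
    ultimately have "fsigma_in C (An n)" unfolding An_def by (rule fsigma_in_Union)
    then show ?thesis using Inl by (simp add: B_def)
  next
    case (Inr p)
    then show ?thesis using that Wf by (auto simp: B_def J_def)
  qed
  have "\<Inter>(B ` J) = e ` topspace X"
  proof
    show "e ` topspace X \<subseteq> \<Inter>(B ` J)"
    proof
      fix y assume "y \<in> e ` topspace X"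
      then obtain x where x: "x \<in> topspace X" "y = e x" by auto
      have "y \<in> An n" for n
      proof -
        define Ds where "Ds i = (SOME D. D \<in> \<D> i \<and> x \<in> D)" for i
        have Ds: "Ds i \<in> \<D> i \<and> x \<in> Ds i" for i
        proof -
          have "\<exists>D. D \<in> \<D> i \<and> x \<in> D" using cov[of i] x by (auto simp: cover_of_def)
          then show ?thesis unfolding Ds_def by (rule someI_ex)
        qed
        define ks where "ks i = (SOME k. x \<in> Fp (Ds i) k)" for i
        have ks: "x \<in> Fp (Ds i) (ks i)" for i
        proof -
          have "\<exists>k. x \<in> Fp (Ds i) k" using Fp[of "Ds i" i] Ds[of i] by blast
          then show ?thesis unfolding ks_def by (rule someI_ex)
        qed
        define t where "t = map (\<lambda>i. (Ds i, ks i)) [0..<n]"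
        have "valid t" using Ds by (auto simp: t_def valid_def)
        moreover have "length t = n" by (simp add: t_def)
        moreover have "x \<in> P t" using ks x by (auto simp: P_def t_def)
        moreover have "e x \<in> Cl t"
        proof -
          have "e ` P t \<subseteq> topspace C" using eX PX[of t] by blast
          then have "e ` P t \<subseteq> C closure_of (e ` P t)" by (rule closure_of_subset)
          then show ?thesis using \<open>x \<in> P t\<close> unfolding Cl_def by blast
        qed
        ultimately show ?thesis
          using x unfolding An_def T_def by blast
      qed
      moreover have "y \<in> Wf p" if "p \<in> Inc" for p
        using Wf[OF that] \<open>y \<in> e ` topspace X\<close> by blast
      ultimately show "y \<in> \<Inter>(B ` J)"
        by (auto simp: J_def B_def)
    qed
    show "\<Inter>(B ` J) \<subseteq> e ` topspace X"
    proof
      fix y assume y: "y \<in> \<Inter>(B ` J)"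
      have yA: "y \<in> An n" for n
      proof -
        have "Inl n \<in> J" by (simp add: J_def)
        then have "y \<in> B (Inl n)" using y by blast
        then show ?thesis by (simp add: B_def)
      qed
      have yW: "y \<in> Wf p" if "p \<in> Inc" for p
      proof -
        have "Inr p \<in> J" using that by (simp add: J_def)
        then have "y \<in> B (Inr p)" using y by blast
        then show ?thesis by (simp add: B_def)
      qed
      have "\<forall>n. \<exists>t. t \<in> T \<and> length t = n \<and> y \<in> Cl t" using yA An_def by auto
      then obtain tn where tn: "\<And>n. tn n \<in> T \<and> length (tn n) = n \<and> y \<in> Cl (tn n)" by metis
      have yC: "y \<in> topspace C"
      proof -
        have "y \<in> C closure_of (e ` P (tn 0))" using tn[of 0] unfolding Cl_def by blast
        then show ?thesis using closure_of_subset_topspace by fast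
      qed
      have compat: "fst (tn n ! i) = fst (tn m ! i)" if "i < n" "i < m" for n m i
      proof (rule ccontr)
        assume "fst (tn n ! i) \<noteq> fst (tn m ! i)"
        then have I: "(tn n, tn m) \<in> Inc"
          using tn[of n] tn[of m] that by (simp add: Inc_def) blast
        have "y \<in> Wf (tn n, tn m)" by (rule yW[OF I])
        then have "y \<notin> Cl (tn n) \<inter> Cl (tn m)" using Wf[OF I] by auto
        then show False using tn[of n] tn[of m] by blast
      qed
      define Q where "Q n = topspace X \<inter> (\<Inter>i\<in>{..<n}. fst (tn n ! i))" for n
      have Qanti: "Q m \<subseteq> Q n" if nm: "n \<le> m" for n m
      proof
        fix x assume "x \<in> Q m"
        then have x1: "x \<in> topspace X" and x2: "\<And>i. i < m \<Longrightarrow> x \<in> fst (tn m ! i)"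
          by (auto simp: Q_def)
        have "x \<in> fst (tn n ! i)" if "i < n" for i
          using x2[of i] compat[of i n m] that nm by simp
        then show "x \<in> Q n" using x1 by (simp add: Q_def)
      qed
      have PQ: "P (tn n) \<subseteq> Q n" for n
      proof
        fix x assume xP: "x \<in> P (tn n)"
        have v: "valid (tn n)" "length (tn n) = n" using tn[of n] by (auto simp: T_def)
        have "x \<in> fst (tn n ! i)" if "i < n" for i
          using Psub[OF v(1), of i] that v(2) xP by auto
        then show "x \<in> Q n" using xP PX[of "tn n"] by (auto simp: Q_def)
      qed
      define F where "F = {A. A \<subseteq> topspace X \<and> (\<exists>U n. openin C U \<and> y \<in> U \<and> topspace X \<inter> e -` U \<inter> Q n \<subseteq> A)}"
      have Fmem: "A \<in> F \<longleftrightarrow> A \<subseteq> topspace X \<and> (\<exists>U n. openin C U \<and> y \<in> U \<and> topspace X \<inter> e -` U \<inter> Q n \<subseteq> A)" for A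
        by (simp add: F_def)
      have FI: "A \<in> F" if "A \<subseteq> topspace X" "openin C U" "y \<in> U" "topspace X \<inter> e -` U \<inter> Q n \<subseteq> A" for A U n
        using that Fmem[of A] by blast
      have ne: "topspace X \<inter> e -` U \<inter> Q n \<noteq> {}" if ne_U: "openin C U" and ne_y: "y \<in> U" for U n
      proof -
        have "y \<in> C closure_of (e ` P (tn n))" using tn[of n] unfolding Cl_def by blast
        then have "\<forall>T. y \<in> T \<and> openin C T \<longrightarrow> (\<exists>w. w \<in> e ` P (tn n) \<and> w \<in> T)"
          by (simp add: in_closure_of)
        then have "\<exists>w. w \<in> e ` P (tn n) \<and> w \<in> U" using ne_U ne_y by blast
        then obtain z where z: "z \<in> P (tn n)" "e z \<in> U" by blast
        then have "z \<in> topspace X \<inter> e -` U \<inter> Q n" using PQ[of n] PX[of "tn n"] by blast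
        then show ?thesis by blast
      qed
      have "filter_on X F"
        unfolding filter_on_def
      proof (intro conjI allI impI ballI)
        have "topspace X \<in> F" by (rule FI[of _ "topspace C" 0]) (use yC in auto)
        then show "F \<noteq> {}" by blast
        show "A \<subseteq> topspace X" if "A \<in> F" for A using that Fmem[of A] by blast
        show "{} \<notin> F"
        proof
          assume "{} \<in> F"
          then obtain U n where "openin C U" "y \<in> U" "topspace X \<inter> e -` U \<inter> Q n \<subseteq> {}"
            using Fmem[of "{}"] by blast
          then show False using ne by blast
        qed
        show "B \<in> F" if AB: "A \<in> F \<and> A \<subseteq> B \<and> B \<subseteq> topspace X" for A B
        proof -
          from AB obtain U n where "openin C U" "y \<in> U" "topspace X \<inter> e -` U \<inter> Q n \<subseteq> A"
            using Fmem[of A] by blast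
          then show ?thesis using AB by (intro FI[of _ U n]) auto
        qed
        show "A \<inter> B \<in> F" if AB: "A \<in> F \<and> B \<in> F" for A B
        proof -
          obtain U n where 1: "openin C U" "y \<in> U" "topspace X \<inter> e -` U \<inter> Q n \<subseteq> A" "A \<subseteq> topspace X"
            using AB Fmem[of A] by blast
          obtain V m where 2: "openin C V" "y \<in> V" "topspace X \<inter> e -` V \<inter> Q m \<subseteq> B"
            using AB Fmem[of B] by blast
          have "topspace X \<inter> e -` (U \<inter> V) \<inter> Q (max n m) \<subseteq> A \<inter> B"
            using 1 2 Qanti[of n "max n m"] Qanti[of m "max n m"] by auto
          then show ?thesis using 1 2 by (intro FI[of _ "U \<inter> V" "max n m"]) auto
        qed
      qed
      moreover have "F \<inter> \<D> n \<noteq> {}" for n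
      proof -
        let ?D = "fst (tn (Suc n) ! n)"
        have D: "?D \<in> \<D> n" using tn[of "Suc n"] by (auto simp: T_def valid_def)
        have "?D \<subseteq> topspace X" using D cov[of n] by (auto simp: cover_of_def)
        moreover have "topspace X \<inter> e -` topspace C \<inter> Q (Suc n) \<subseteq> ?D" by (auto simp: Q_def)
        ultimately have "?D \<in> F" using yC by (intro FI[of _ "topspace C" "Suc n"]) auto
        then show ?thesis using D by blast
      qed
      ultimately obtain x where x: "x \<in> topspace X" "accumulation_point_of_filter X F x"
        using comp by (auto simp: complete_sequence_def)
      have "e x = y"
      proof (rule ccontr)
        assume nexy: "e x \<noteq> y"
        have exC: "e x \<in> topspace C" using eX x(1) by blast
        have "\<exists>U V. openin C U \<and> openin C V \<and> e x \<in> U \<and> y \<in> V \<and> disjnt U V"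
          using Hs[unfolded Hausdorff_space_def, rule_format, OF conjI[OF exC conjI[OF yC nexy]]] .
        then obtain U V where UV: "openin C U" "openin C V" "e x \<in> U" "y \<in> V" "disjnt U V"
          by blast
        have o: "openin X (topspace X \<inter> e -` U)"
        proof -
          have "{z \<in> topspace X. e z \<in> U} = topspace X \<inter> e -` U" by auto
          then show ?thesis using openin_continuous_map_preimage[OF cm UV(1)] by simp
        qed
        have xo: "x \<in> topspace X \<inter> e -` U" using x(1) UV(3) by blast
        have "topspace X \<inter> e -` V \<inter> Q 0 \<in> F"
          using UV by (intro FI[of _ V 0]) auto
        then have "(topspace X \<inter> e -` U) \<inter> (topspace X \<inter> e -` V \<inter> Q 0) \<noteq> {}"
          using x(2) o xo unfolding accumulation_point_of_filter_def by blast
        then show False using UV(5) unfolding disjnt_def by blast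
      qed
      then show "y \<in> e ` topspace X" using x by blast
    qed
  qed
  moreover have "range (from_nat_into J) = J" using cJ J0 by simp
  moreover have "\<Inter>(B ` range (from_nat_into J)) = (\<Inter>k. B (from_nat_into J k))"
    by (simp add: image_image)
  ultimately have I1: "(\<Inter>k. B (from_nat_into J k)) = e ` topspace X"
    by simp
  have I2: "\<forall>k. fsigma_in C (B (from_nat_into J k))"
    using Bfs from_nat_into[OF J0] by blast
  show "fsigma_delta_in C (e ` topspace X)"
    unfolding fsigma_delta_in_def
    by (rule exI[of _ "\<lambda>k. B (from_nat_into J k)"]) (use I1 I2 in simp)
qed

end
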